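(* Fix integers $L\ge 1$ and $n_0,\dots,n_L\ge 1$, and let $\boldsymbol{\mathcal W}=\mathbb{R}^{n_0\times n_1}\times\cdots\times\mathbb{R}^{n_{L-1}\times n_L}$, which has dimension $N=\sum_{l=1}^L n_{l-1}n_l$. For $\mathbf W=(W_1,\dots,W_L)\in\boldsymbol{\mathcal W}$ let $F(\mathbf W,\cdot)\colon\mathbb{R}^{n_0}\to\mathbb{R}^{n_L}$ be the network map $F(\mathbf W,\cdot)=\Lambda_L(W_L,\cdot)\circ\cdots\circ\Lambda_1(W_1,\cdot)$, where $\Lambda_l(W_l,x)=\sigma_l(W_l^\top x+b_l)$ with fixed biases $b_l\in\mathbb{R}^{n_l}$, each $\sigma_l$ applies a smooth, monotonically increasing, Lipschitz scalar function entrywise for $l<L$, and $\sigma_L=\mathrm{id}$. Let $f^*\colon\boldsymbol{\mathcal X}\to\boldsymbol{\mathcal Y}$ be a map (the task map), let $x_1,\dots,x_T\in\boldsymbol{\mathcal X}$ and $y_i=f^*(x_i)$. Let $E\colon\boldsymbol{\mathcal Y}\times\boldsymbol{\mathcal Y}\to\mathbb{R}$ be an error function such that for every $y\in\boldsymbol{\mathcal Y}$, $E(\cdot,y)$ is differentiable, $E$ has global minima, and $\phi=y$ is a global minimum of $E(\cdot,y)$ if and only if the gradient $\nabla_E(\phi)$ of $E(\cdot,y)$ vanishes at $\phi=y$. Define the empirical loss $\mathcal J(\mathbf W)=\frac1T\sum_{i=1}^T E(F(\mathbf W,x_i),y_i)$ and the matrix $\mathbf P(\mathbf W)=[\mathrm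 D_1F(\mathbf W,x_1),\dots,\mathrm D_1F(\mathbf W,x_T)]\in\mathbb{R}^{N\times Tn_L}$, where $\mathrm D_1F(\mathbf W,x_i)\in\mathbb{R}^{N\times n_L}$ is the (transposed) Jacobian of $\mathbf W\mapsto F(\mathbf W,x_i)$, i.e. its columns are the gradients with respect to all $N$ weight entries of the $n_L$ output components. Suppose $\operatorname{rank}\mathbf P(\mathbf W)=Tn_L$ for all $\mathbf W\in\boldsymbol{\mathcal W}$. Then: (1) if exact learning is achievable, i.e. there is $\mathbf W^*\in\boldsymbol{\mathcal W}$ with $F(\mathbf W^*,x_i)=f^*(x_i)$ for all $i=1,\dots,T$, then $\mathbf W^*$ is a global minimum of $\mathcal J$ and all critical points of $\mathcal J$ are global minima; (2) if exact learning is unachievable (no such $\mathbf W^*$ exists), then $\mathcal J$ has no critical point; in particular $\mathcal J$ is non-coercive.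
   Context: A critical point of $\mathcal J$ is a $\mathbf W$ with $\nabla\mathcal J(\mathbf W)=0$; by the chain rule $\nabla\mathcal J(\mathbf W)$ is proportional to $\mathbf P(\mathbf W)\boldsymbol\varepsilon(\mathbf W)$ with $\boldsymbol\varepsilon(\mathbf W)=[\nabla_E(F(\mathbf W,x_1))^\top,\dots,\nabla_E(F(\mathbf W,x_T))^\top]^\top\in\mathbb{R}^{Tn_L}$, where $\nabla_E(F(\mathbf W,x_i))$ is the gradient of $E(\cdot,y_i)$ at $F(\mathbf W,x_i)$. *)

theory Defs
  imports Complex_Main "Jordan_Normal_Form.DL_Rank"
begin

text \<open>Vectors of R^m are represented as functions nat => real vanishing outside {..<m}.\<close>

definition vsp :: "nat \<Rightarrow> (nat \<Rightarrow> real) set" where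
  "vsp m = {v. \<forall>i\<ge>m. v i = 0}"

definition enorm :: "nat \<Rightarrow> (nat \<Rightarrow> real) \<Rightarrow> real" where
  "enorm m h = sqrt (\<Sum>i<m. (h i)\<^sup>2)"

definition has_grad :: "nat \<Rightarrow> ((nat \<Rightarrow> real) \<Rightarrow> real) \<Rightarrow> (nat \<Rightarrow> real) \<Rightarrow> (nat \<Rightarrow> real) \<Rightarrow> bool" where
  "has_grad m g phi G \<longleftrightarrow> G \<in> vsp m \<and>
     (\<forall>e>0. \<exists>d>0. \<forall>h\<in>vsp m. 0 < enorm m h \<and> enorm m h < d \<longrightarrow>
        \<bar>g (\<lambda>i. phi i + h i) - g phi - (\<Sum>i<m. G i * h i)\<bar> \<le> e * enorm m h)"

definition grad :: "nat \<Rightarrow> ((nat \<Rightarrow> real) \<Rightarrow> real) \<Rightarrow> (nat \<Rightarrow> real) \<Rightarrow> (nat \<Rightarrow> real)" where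
  "grad m g phi = (THE G. has_grad m g phi G)"

definition differentiable_on_Rm :: "nat \<Rightarrow> ((nat \<Rightarrow> real) \<Rightarrow> real) \<Rightarrow> bool" where
  "differentiable_on_Rm m g \<longleftrightarrow> (\<forall>phi\<in>vsp m. \<exists>G. has_grad m g phi G)"

definition smooth_real :: "(real \<Rightarrow> real) \<Rightarrow> bool" where
  "smooth_real f \<longleftrightarrow> (\<exists>D. D 0 = f \<and> (\<forall>k x. (D k has_real_derivative D (Suc k) x) (at x)))"

definition lipschitz_real :: "(real \<Rightarrow> real) \<Rightarrow> bool" where
  "lipschitz_real f \<longleftrightarrow> (\<exists>C. \<forall>a b. \<bar>f a - f b\<bar> \<le> C * \<bar>a - b\<bar>)"

text \<open>Weight space: W = (W_1,...,W_L), W_l in R^(n_(l-1) x n_l), vectorised (row-major, layer by layer)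
  into R^N with N = sum_l n_(l-1) n_l.\<close>
definition wdim :: "(nat \<Rightarrow> nat) \<Rightarrow> nat \<Rightarrow> nat" where
  "wdim n L = (\<Sum>l\<in>{1..L}. n (l - 1) * n l)"

definition widx :: "(nat \<Rightarrow> nat) \<Rightarrow> nat \<Rightarrow> nat \<Rightarrow> nat \<Rightarrow> nat" where
  "widx n l i j = (\<Sum>m\<in>{1..<l}. n (m - 1) * n m) + i * n l + j"

definition layer :: "(nat \<Rightarrow> nat) \<Rightarrow> (real \<Rightarrow> real) \<Rightarrow> (nat \<Rightarrow> real) \<Rightarrow> nat
                     \<Rightarrow> (nat \<Rightarrow> real) \<Rightarrow> (nat \<Rightarrow> real) \<Rightarrow> (nat \<Rightarrow> real)" where
  "layer n s bl l w v = (\<lambda>j. if j < n l then s ((\<Sum>i<n (l - 1). w (widx n l i j) * v i) + bl j) else 0)"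

fun net :: "(nat \<Rightarrow> nat) \<Rightarrow> (nat \<Rightarrow> real \<Rightarrow> real) \<Rightarrow> (nat \<Rightarrow> nat \<Rightarrow> real) \<Rightarrow> nat
            \<Rightarrow> (nat \<Rightarrow> real) \<Rightarrow> (nat \<Rightarrow> real) \<Rightarrow> (nat \<Rightarrow> real)" where
  "net n s b 0 w x = x"
| "net n s b (Suc l) w x = layer n (s (Suc l)) (b (Suc l)) (Suc l) w (net n s b l w x)"

definition emp_loss :: "(nat \<Rightarrow> nat) \<Rightarrow> nat \<Rightarrow> (nat \<Rightarrow> real \<Rightarrow> real) \<Rightarrow> (nat \<Rightarrow> nat \<Rightarrow> real)
    \<Rightarrow> ((nat \<Rightarrow> real) \<Rightarrow> (nat \<Rightarrow> real) \<Rightarrow> real) \<Rightarrow> ((nat \<Rightarrow> real) \<Rightarrow> (nat \<Rightarrow> real))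
    \<Rightarrow> nat \<Rightarrow> (nat \<Rightarrow> (nat \<Rightarrow> real)) \<Rightarrow> (nat \<Rightarrow> real) \<Rightarrow> real" where
  "emp_loss n L s b E fstar T xs w = (1 / real T) * (\<Sum>t<T. E (net n s b L w (xs t)) (fstar (xs t)))"

text \<open>P(W) = [D_1F(W,x_1), ..., D_1F(W,x_T)] in R^(N x T n_L); column t*n_L + k is the gradient
  (w.r.t. all N weight entries) of the k-th output component at input x_t.\<close>
definition Pmat :: "(nat \<Rightarrow> nat) \<Rightarrow> nat \<Rightarrow> (nat \<Rightarrow> real \<Rightarrow> real) \<Rightarrow> (nat \<Rightarrow> nat \<Rightarrow> real)
    \<Rightarrow> nat \<Rightarrow> (nat \<Rightarrow> (nat \<Rightarrow> real)) \<Rightarrow> (nat \<Rightarrow> real) \<Rightarrow> real mat" where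
  "Pmat n L s b T xs w = mat (wdim n L) (T * n L)
     (\<lambda>(r, c). grad (wdim n L) (\<lambda>w'. net n s b L w' (xs (c div n L)) (c mod n L)) w r)"

definition global_min :: "nat \<Rightarrow> ((nat \<Rightarrow> real) \<Rightarrow> real) \<Rightarrow> (nat \<Rightarrow> real) \<Rightarrow> bool" where
  "global_min m g w \<longleftrightarrow> w \<in> vsp m \<and> (\<forall>w'\<in>vsp m. g w \<le> g w')"

definition critical_point :: "nat \<Rightarrow> ((nat \<Rightarrow> real) \<Rightarrow> real) \<Rightarrow> (nat \<Rightarrow> real) \<Rightarrow> bool" where
  "critical_point m g w \<longleftrightarrow> w \<in> vsp m \<and> has_grad m g w (\<lambda>_. 0)"

definition coercive :: "nat \<Rightarrow> ((nat \<Rightarrow> real) \<Rightarrow> real) \<Rightarrow> bool" where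
  "coercive m g \<longleftrightarrow> (\<forall>M. \<exists>R. \<forall>w\<in>vsp m. enorm m w > R \<longrightarrow> g w > M)"

end

theory Submission
  imports Defs "HOL-Analysis.Analysis"
begin

type_synonym V = "nat \<Rightarrow>\<^sub>C real"

definition dl :: "nat \<Rightarrow> V" where
  "dl r = Bcontfun (\<lambda>i. if i = r then 1 else 0)"

lemma apply_dl[simp]: "apply_bcontfun (dl r) i = (if i = r then 1 else 0)"
proof -
  have "(\<lambda>i::nat. if i = r then 1 else (0::real)) \<in> bcontfun"
    by (rule bcontfun_normI[where b=1]) auto
  then show ?thesis unfolding dl_def by (simp add: Bcontfun_inverse)
qed

lemma apply_sum: "apply_bcontfun (sum f A) i = (\<Sum>a\<in>A. apply_bcontfun (f a) i)"
  by (induction A rule: infinite_finite_induct) auto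

definition emb :: "nat \<Rightarrow> (nat \<Rightarrow> real) \<Rightarrow> V" where
  "emb m h = (\<Sum>r<m. h r *\<^sub>R dl r)"

lemma apply_emb: "apply_bcontfun (emb m h) i = (if i < m then h i else 0)"
proof -
  have "apply_bcontfun (emb m h) i = (\<Sum>r<m. h r * (if i = r then 1 else 0))"
    unfolding emb_def apply_sum by simp
  also have "\<dots> = (\<Sum>r<m. if r = i then h r else 0)"
    by (intro sum.cong) auto
  also have "\<dots> = (if i < m then h i else 0)" by (simp add: sum.delta)
  finally show ?thesis .
qed

lemma apply_emb_vsp: "h \<in> vsp m \<Longrightarrow> apply_bcontfun (emb m h) = h"
  by (auto simp: apply_emb vsp_def)

lemma coord_bl: "bounded_linear (\<lambda>u::V. apply_bcontfun u r)"
  apply (rule bounded_linear_intro[where K=1])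
    apply simp
   apply simp
  by (metis norm_bounded mult.right_neutral)

lemma coord_le_enorm: "i < m \<Longrightarrow> \<bar>h i\<bar> \<le> enorm m h"
proof -
  assume i: "i < m"
  have "(h i)\<^sup>2 \<le> (\<Sum>j<m. (h j)\<^sup>2)"
    using i by (intro member_le_sum) auto
  then have "sqrt ((h i)\<^sup>2) \<le> enorm m h" unfolding enorm_def by (rule real_sqrt_le_mono)
  then show ?thesis by simp
qed

lemma enorm_nonneg: "0 \<le> enorm m h"
  unfolding enorm_def by (auto intro: sum_nonneg)

lemma norm_emb_le: "norm (emb m h) \<le> enorm m h"
  apply (rule norm_bound)
  using coord_le_enorm[of _ m h] enorm_nonneg[of m h] by (auto simp: apply_emb)

lemma enorm_le_bound:
  assumes "\<And>i. i < M \<Longrightarrow> \<bar>h i\<bar> \<le> B"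
  shows "enorm M h \<le> sqrt (real M) * B"
proof -
  have B: "0 \<le> B" if "0 < M" using assms[of 0] that by auto
  have "(\<Sum>j<M. (h j)\<^sup>2) \<le> (\<Sum>j<M. B\<^sup>2)"
  proof (intro sum_mono)
    fix j assume "j \<in> {..<M}"
    then have "\<bar>h j\<bar> \<le> B" using assms by auto
    then have "\<bar>h j\<bar>\<^sup>2 \<le> B\<^sup>2" by (intro power_mono) auto
    then show "(h j)\<^sup>2 \<le> B\<^sup>2" by simp
  qed
  also have "\<dots> = real M * B\<^sup>2" by simp
  finally have "enorm M h \<le> sqrt (real M * B\<^sup>2)" unfolding enorm_def by (rule real_sqrt_le_mono)
  also have "\<dots> = sqrt (real M) * B" using B by (cases "M = 0") (auto simp: real_sqrt_mult)
  finally show ?thesis .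
qed

lemma enorm_zero_imp:
  assumes "enorm M h = 0" "i < M" shows "h i = 0"
  using coord_le_enorm[OF assms(2), of h] assms(1) by simp

lemma linear_emb:
  assumes "linear D"
  shows "D (emb m h) = (\<Sum>r<m. h r * D (dl r))"
  unfolding emb_def using assms by (simp add: linear_sum linear_scale)

lemma conv1:
  assumes der: "((\<lambda>u. g (apply_bcontfun u)) has_derivative D) (at (emb m w))"
    and w: "w \<in> vsp m"
  shows "has_grad m g w (\<lambda>r. if r < m then D (dl r) else 0)"
  unfolding has_grad_def
proof (intro conjI allI impI)
  show "(\<lambda>r. if r < m then D (dl r) else 0) \<in> vsp m" by (auto simp: vsp_def)
  fix e :: real assume e: "e > 0"
  from der[unfolded has_derivative_at_alt] e obtain d where d: "d > 0"
    and H: "\<And>y. norm (y - emb m w) < d \<Longrightarrow>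
      norm (g (apply_bcontfun y) - g (apply_bcontfun (emb m w)) - D (y - emb m w)) \<le> e * norm (y - emb m w)"
    and bl: "bounded_linear D"
    by blast
  show "\<exists>d>0. \<forall>h\<in>vsp m. 0 < enorm m h \<and> enorm m h < d \<longrightarrow>
      \<bar>g (\<lambda>i. w i + h i) - g w - (\<Sum>i<m. (if i < m then D (dl i) else 0) * h i)\<bar> \<le> e * enorm m h"
  proof (intro exI[of _ d] conjI ballI impI)
    fix h assume h: "h \<in> vsp m" and hn: "0 < enorm m h \<and> enorm m h < d"
    define y where "y = emb m w + emb m h"
    have yd: "y - emb m w = emb m h" by (simp add: y_def)
    have ny: "norm (emb m h) < d" using norm_emb_le[of m h] hn by linarith
    have ay: "apply_bcontfun y = (\<lambda>i. w i + h i)"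
      using w h by (auto simp: y_def apply_emb_vsp)
    have lin: "D (emb m h) = (\<Sum>i<m. (if i < m then D (dl i) else 0) * h i)"
      using linear_emb[OF bounded_linear.linear[OF bl]] by (simp add: mult.commute)
    have "\<bar>g (\<lambda>i. w i + h i) - g w - (\<Sum>i<m. (if i < m then D (dl i) else 0) * h i)\<bar>
        \<le> e * norm (emb m h)"
      using H[of y] ny yd ay lin apply_emb_vsp[OF w] by simp
    also have "\<dots> \<le> e * enorm m h" using norm_emb_le[of m h] e by simp
    finally show "\<bar>g (\<lambda>i. w i + h i) - g w - (\<Sum>i<m. (if i < m then D (dl i) else 0) * h i)\<bar> \<le> e * enorm m h" .
  qed (use d in auto)
qed

lemma bl_gradlin: "bounded_linear (\<lambda>u::V. \<Sum>k<M. G k * apply_bcontfun u k)"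
  by (intro bounded_linear_sum bounded_linear_compose[OF bounded_linear_mult_right coord_bl])

lemma conv2:
  assumes hg: "has_grad M f phi G"
    and u0: "\<And>i. (if i < M then apply_bcontfun u0 i else 0) = phi i"
  shows "((\<lambda>u. f (\<lambda>i. if i < M then apply_bcontfun u i else 0)) has_derivative
           (\<lambda>u. \<Sum>k<M. G k * apply_bcontfun u k)) (at u0)"
  unfolding has_derivative_at_alt
proof (intro conjI allI impI bl_gradlin)
  fix e :: real assume e: "e > 0"
  define c where "c = sqrt (real M) + 1"
  have c: "c > 0" "sqrt (real M) \<le> c" unfolding c_def using real_sqrt_ge_zero[of "real M"] by linarith+
  from hg[unfolded has_grad_def] e c obtain d where d: "d > 0" and
    H: "\<And>h. h \<in> vsp M \<Longrightarrow> 0 < enorm M h \<and> enorm M h < d \<Longrightarrow>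
        \<bar>f (\<lambda>i. phi i + h i) - f phi - (\<Sum>i<M. G i * h i)\<bar> \<le> (e / c) * enorm M h"
    by (metis divide_pos_pos)
  show "\<exists>d>0. \<forall>y. norm (y - u0) < d \<longrightarrow>
      norm (f (\<lambda>i. if i < M then apply_bcontfun y i else 0) - f (\<lambda>i. if i < M then apply_bcontfun u0 i else 0)
        - (\<Sum>k<M. G k * apply_bcontfun (y - u0) k)) \<le> e * norm (y - u0)"
  proof (intro exI[of _ "d / c"] conjI allI impI)
    show "d / c > 0" using d c by simp
    fix y assume yd: "norm (y - u0) < d / c"
    define h where "h = (\<lambda>i. if i < M then apply_bcontfun (y - u0) i else 0)"
    have hv: "h \<in> vsp M" by (auto simp: h_def vsp_def)
    have hb: "enorm M h \<le> c * norm (y - u0)"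
    proof -
      have "enorm M h \<le> sqrt (real M) * norm (y - u0)"
        by (rule enorm_le_bound) (auto simp: h_def norm_bounded[of "y - u0", simplified])
      also have "\<dots> \<le> c * norm (y - u0)" using c by (intro mult_right_mono) auto
      finally show ?thesis .
    qed
    have eqy: "(\<lambda>i. if i < M then apply_bcontfun y i else 0) = (\<lambda>i. phi i + h i)"
    proof (rule ext)
      fix i show "(if i < M then apply_bcontfun y i else 0) = phi i + h i"
        using u0[of i] by (cases "i < M") (auto simp: h_def)
    qed
    have equ: "(\<lambda>i. if i < M then apply_bcontfun u0 i else 0) = phi"
      using u0 by auto
    have eqs: "(\<Sum>k<M. G k * apply_bcontfun (y - u0) k) = (\<Sum>i<M. G i * h i)"
      by (auto simp: h_def intro: sum.cong)
    show "norm (f (\<lambda>i. if i < M then apply_bcontfun y i else 0) - f (\<lambda>i. if i < M then apply_bcontfun u0 i else 0)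
        - (\<Sum>k<M. G k * apply_bcontfun (y - u0) k)) \<le> e * norm (y - u0)"
    proof (cases "enorm M h = 0")
      case True
      then have "\<And>i. h i = 0" using enorm_zero_imp[OF True] by (auto simp: h_def)
      then have "(\<lambda>i. phi i + h i) = phi" "(\<Sum>i<M. G i * h i) = 0" by auto
      then show ?thesis unfolding eqy equ eqs using e by simp
    next
      case False
      then have pos: "0 < enorm M h" using enorm_nonneg[of M h] by linarith
      have "enorm M h < d" using hb yd c
        by (smt (verit, ccfv_SIG) mult.commute pos_less_divide_eq)
      then have "\<bar>f (\<lambda>i. phi i + h i) - f phi - (\<Sum>i<M. G i * h i)\<bar> \<le> (e / c) * enorm M h"
        using H[OF hv] pos by blast
      also have "\<dots> \<le> (e / c) * (c * norm (y - u0))" using hb e c by (intro mult_left_mono) auto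
      also have "\<dots> = e * norm (y - u0)" using c by simp
      finally show ?thesis unfolding eqy equ eqs by simp
    qed
  qed
qed

lemma has_grad_unique:
  assumes "has_grad M f phi G1" "has_grad M f phi G2" "phi \<in> vsp M"
  shows "G1 = G2"
proof -
  have u0: "\<And>i. (if i < M then apply_bcontfun (emb M phi) i else 0) = phi i"
    using assms(3) by (auto simp: apply_emb vsp_def)
  have "(\<lambda>u. \<Sum>k<M. G1 k * apply_bcontfun u k) = (\<lambda>u. \<Sum>k<M. G2 k * apply_bcontfun u k)"
    using has_derivative_unique[OF conv2[OF assms(1) u0] conv2[OF assms(2) u0]] .
  then have "\<And>r. (\<Sum>k<M. G1 k * apply_bcontfun (dl r) k) = (\<Sum>k<M. G2 k * apply_bcontfun (dl r) k)"
    by metis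
  then have "\<And>r. r < M \<Longrightarrow> G1 r = G2 r"
    by (simp add: if_distrib sum.delta cong: if_cong)
  moreover have "G1 \<in> vsp M" "G2 \<in> vsp M" using assms(1,2) by (auto simp: has_grad_def)
  ultimately show ?thesis by (auto simp: vsp_def fun_eq_iff) (metis not_le)
qed

lemma grad_eq:
  assumes "has_grad M f phi G" "phi \<in> vsp M"
  shows "grad M f phi = G"
  unfolding grad_def using has_grad_unique[OF _ assms(1) assms(2)] assms(1) by (metis the_equality)

lemma net_vsp: "net n s b (Suc l) w x \<in> vsp (n (Suc l))"
  by (simp add: vsp_def layer_def)

lemma net_diff:
  assumes "l \<le> L"
    and sd: "\<And>l' y. 1 \<le> l' \<Longrightarrow> l' \<le> L \<Longrightarrow> \<exists>d. (s l' has_real_derivative d) (at y)"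
  shows "\<exists>D. ((\<lambda>u. net n s b l (apply_bcontfun u) x j) has_derivative D) (at u0)"
  using assms(1)
proof (induction l arbitrary: j)
  case 0
  show ?case
    apply simp
    apply (rule exI)
    apply (rule has_derivative_const)
    done
next
  case (Suc l)
  then have IH: "\<And>i. \<exists>D. ((\<lambda>u. net n s b l (apply_bcontfun u) x i) has_derivative D) (at u0)" by auto
  then obtain Df where Df: "\<And>i. ((\<lambda>u. net n s b l (apply_bcontfun u) x i) has_derivative Df i) (at u0)"
    by metis
  show ?case
  proof (cases "j < n (Suc l)")
    case False
    then show ?thesis
      apply (simp add: layer_def)
      apply (rule exI)
      apply (rule has_derivative_const)
      done
  next
    case True
    define g where "g = (\<lambda>u::V. (\<Sum>i<n (Suc l - 1). apply_bcontfun u (widx n (Suc l) i j) * net n s b l (apply_bcontfun u) x i) + b (Suc l) j)"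
    have "\<exists>Dg. (g has_derivative Dg) (at u0)"
      unfolding g_def
      apply (rule exI)
      apply (rule has_derivative_add)
       apply (rule has_derivative_sum)
       apply (rule has_derivative_mult)
        apply (rule bounded_linear_imp_has_derivative[OF coord_bl])
       apply (rule Df)
      apply (rule has_derivative_const)
      done
    then obtain Dg where Dg: "(g has_derivative Dg) (at u0)" by blast
    obtain d where d: "(s (Suc l) has_real_derivative d) (at (g u0))" using sd[of "Suc l"] Suc.prems by auto
    have "((\<lambda>u. s (Suc l) (g u)) has_derivative (\<lambda>v. d * Dg v)) (at u0)"
      using has_derivative_compose[OF Dg d[unfolded has_field_derivative_def]] .
    moreover have "(\<lambda>u. net n s b (Suc l) (apply_bcontfun u) x j) = (\<lambda>u. s (Suc l) (g u))"
      using True by (auto simp: layer_def g_def)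
    ultimately show ?thesis by auto
  qed
qed

lemma sum_div_mod:
  fixes K T :: nat
  assumes "K > 0"
  shows "(\<Sum>c<T*K. f (c div K) (c mod K)) = (\<Sum>t<T. \<Sum>k<K. f t k)"
proof -
  have "(\<Sum>c<T*K. f (c div K) (c mod K)) = (\<Sum>p\<in>{..<T} \<times> {..<K}. f (fst p) (snd p))"
  proof (rule sum.reindex_bij_witness[where i = "\<lambda>p. fst p * K + snd p" and j = "\<lambda>c. (c div K, c mod K)"])
    fix c assume "c \<in> {..<T*K}"
    then show "(c div K, c mod K) \<in> {..<T} \<times> {..<K}" using assms
      by (auto simp: less_mult_imp_div_less)
  next
    fix p assume p: "p \<in> {..<T} \<times> {..<K}"
    then obtain t k where pk: "p = (t, k)" "t < T" "k < K" by auto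
    have "t * K + k < T * K"
    proof -
      have "t * K + k < t * K + K" using pk by simp
      also have "\<dots> = Suc t * K" by simp
      also have "\<dots> \<le> T * K" using pk by (intro mult_right_mono) auto
      finally show ?thesis .
    qed
    then show "fst p * K + snd p \<in> {..<T*K}" using pk by simp
  qed (use assms in auto)
  also have "\<dots> = (\<Sum>t<T. \<Sum>k<K. f t k)"
    by (simp add: sum.cartesian_product split_beta)
  finally show ?thesis .
qed

lemma J_deriv:
  fixes Fn :: "nat \<Rightarrow> (nat \<Rightarrow> real) \<Rightarrow> (nat \<Rightarrow> real)" and Ef :: "nat \<Rightarrow> (nat \<Rightarrow> real) \<Rightarrow> real"
  assumes out: "\<And>t w. Fn t w \<in> vsp K"
    and dF: "\<And>t k. t < T \<Longrightarrow> k < K \<Longrightarrow> ((\<lambda>u. Fn t (apply_bcontfun u) k) has_derivative DF t k) (at u0)"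
    and dE: "\<And>t. t < T \<Longrightarrow> has_grad K (Ef t) (Fn t (apply_bcontfun u0)) (g t)"
  shows "((\<lambda>u. (1 / real T) * (\<Sum>t<T. Ef t (Fn t (apply_bcontfun u)))) has_derivative
          (\<lambda>v. (1 / real T) * (\<Sum>t<T. \<Sum>k<K. g t k * DF t k v))) (at u0)"
proof -
  have each: "((\<lambda>u. Ef t (Fn t (apply_bcontfun u))) has_derivative (\<lambda>v. \<Sum>k<K. g t k * DF t k v)) (at u0)"
    if t: "t < T" for t
  proof -
    define Phi where "Phi = (\<lambda>u. \<Sum>k<K. Fn t (apply_bcontfun u) k *\<^sub>R dl k)"
    have aPhi: "\<And>u i. apply_bcontfun (Phi u) i = (if i < K then Fn t (apply_bcontfun u) i else 0)"
    proof -
      fix u i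
      have "apply_bcontfun (Phi u) i = (\<Sum>k<K. Fn t (apply_bcontfun u) k * (if i = k then 1 else 0))"
        unfolding Phi_def apply_sum by simp
      also have "\<dots> = (\<Sum>k<K. if k = i then Fn t (apply_bcontfun u) k else 0)"
        by (intro sum.cong) auto
      also have "\<dots> = (if i < K then Fn t (apply_bcontfun u) i else 0)" by (simp add: sum.delta)
      finally show "apply_bcontfun (Phi u) i = (if i < K then Fn t (apply_bcontfun u) i else 0)" .
    qed
    have restr: "\<And>u. (\<lambda>i. if i < K then apply_bcontfun (Phi u) i else 0) = Fn t (apply_bcontfun u)"
    proof (rule ext)
      fix u i
      show "(if i < K then apply_bcontfun (Phi u) i else 0) = Fn t (apply_bcontfun u) i"
      proof (cases "i < K")
        case True then show ?thesis by (simp add: aPhi)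
      next
        case False then show ?thesis using out[of t "apply_bcontfun u"] by (simp add: vsp_def)
      qed
    qed
    have dPhi: "(Phi has_derivative (\<lambda>v. \<Sum>k<K. DF t k v *\<^sub>R dl k)) (at u0)"
      unfolding Phi_def
      apply (rule has_derivative_sum)
      apply (rule has_derivative_scaleR_left)
      apply (rule dF[OF t])
      by simp
    have u0: "\<And>i. (if i < K then apply_bcontfun (Phi u0) i else 0) = Fn t (apply_bcontfun u0) i"
      using restr by (simp add: fun_eq_iff)
    have dE': "((\<lambda>z. Ef t (\<lambda>i. if i < K then apply_bcontfun z i else 0)) has_derivative
                (\<lambda>z. \<Sum>k<K. g t k * apply_bcontfun z k)) (at (Phi u0))"
      by (rule conv2[OF dE[OF t] u0])
    have comp: "((\<lambda>u. Ef t (\<lambda>i. if i < K then apply_bcontfun (Phi u) i else 0)) has_derivative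
                (\<lambda>v. \<Sum>k'<K. g t k' * apply_bcontfun (\<Sum>k<K. DF t k v *\<^sub>R dl k) k')) (at u0)"
      using has_derivative_compose[OF dPhi dE'] .
    have eq2: "\<And>v k'. k' < K \<Longrightarrow> apply_bcontfun (\<Sum>k<K. DF t k v *\<^sub>R dl k) k' = DF t k' v"
    proof -
      fix v k' assume k': "k' < K"
      have "apply_bcontfun (\<Sum>k<K. DF t k v *\<^sub>R dl k) k' = (\<Sum>k<K. DF t k v * (if k' = k then 1 else 0))"
        unfolding apply_sum by simp
      also have "\<dots> = (\<Sum>k<K. if k = k' then DF t k v else 0)"
        by (intro sum.cong) auto
      also have "\<dots> = DF t k' v" using k' by (simp add: sum.delta)
      finally show "apply_bcontfun (\<Sum>k<K. DF t k v *\<^sub>R dl k) k' = DF t k' v" .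
    qed
    have "(\<lambda>v. \<Sum>k'<K. g t k' * apply_bcontfun (\<Sum>k<K. DF t k v *\<^sub>R dl k) k') = (\<lambda>v. \<Sum>k<K. g t k * DF t k v)"
      by (rule ext, rule sum.cong, simp_all add: eq2)
    then show ?thesis using comp unfolding restr by simp
  qed
  show ?thesis
    apply (rule has_derivative_mult_right)
    apply (rule has_derivative_sum)
    using each by auto
qed

lemma min_crit:
  assumes diff: "\<And>u. \<exists>D. ((\<lambda>u. g (apply_bcontfun u)) has_derivative D) (at u)"
    and w: "w \<in> vsp m" and mn: "\<forall>w'\<in>vsp m. g w \<le> g w'"
  shows "critical_point m g w"
proof -
  obtain D where D: "((\<lambda>u. g (apply_bcontfun u)) has_derivative D) (at (emb m w))" using diff by blast
  have bl: "bounded_linear D" using D by (rule has_derivative_bounded_linear)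
  have hg: "has_grad m g w (\<lambda>r. if r < m then D (dl r) else 0)" using conv1[OF D w] .
  have z: "D (dl r) = 0" if r: "r < m" for r
  proof -
    define f where "f = (\<lambda>\<tau>::real. g (apply_bcontfun (emb m w + \<tau> *\<^sub>R dl r)))"
    have line: "((\<lambda>\<tau>::real. emb m w + \<tau> *\<^sub>R dl r) has_derivative (\<lambda>\<tau>. \<tau> *\<^sub>R dl r)) (at 0)"
      by (auto intro!: derivative_eq_intros)
    have "(f has_derivative (\<lambda>\<tau>. D (\<tau> *\<^sub>R dl r))) (at 0)"
    proof -
      have D': "((\<lambda>u. g (apply_bcontfun u)) has_derivative D) (at ((\<lambda>\<tau>::real. emb m w + \<tau> *\<^sub>R dl r) 0))"
        using D by simp
      show ?thesis unfolding f_def by (rule has_derivative_compose[OF line D'])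
    qed
    moreover have "(\<lambda>\<tau>. D (\<tau> *\<^sub>R dl r)) = (\<lambda>\<tau>. D (dl r) * \<tau>)"
      using bounded_linear.linear[OF bl] by (auto simp: linear_scale)
    ultimately have dv: "(f has_real_derivative D (dl r)) (at 0)"
      by (simp add: has_field_derivative_def)
    have lm: "\<forall>y. \<bar>0 - y\<bar> < 1 \<longrightarrow> f 0 \<le> f y"
    proof (intro allI impI)
      fix y :: real
      have a: "apply_bcontfun (emb m w + y *\<^sub>R dl r) = (\<lambda>i. w i + y * (if i = r then 1 else 0))"
        using w by (auto simp: apply_emb_vsp)
      have "(\<lambda>i. w i + y * (if i = r then 1 else 0)) \<in> vsp m" using w r by (auto simp: vsp_def)
      then show "f 0 \<le> f y" using mn a w by (auto simp: f_def apply_emb_vsp)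
    qed
    show ?thesis by (rule DERIV_local_min[OF dv _ lm]) simp
  qed
  have "(\<lambda>r. if r < m then D (dl r) else 0) = (\<lambda>_. 0)" using z by auto
  then show ?thesis using hg w by (simp add: critical_point_def)
qed

definition wbox :: "nat \<Rightarrow> real \<Rightarrow> V set" where
  "wbox m R = {u. \<forall>i. (i < m \<longrightarrow> \<bar>apply_bcontfun u i\<bar> \<le> R) \<and> (m \<le> i \<longrightarrow> apply_bcontfun u i = 0)}"

lemma box_compact:
  assumes R: "R \<ge> 0"
  shows "compact (wbox m R)"
proof (induction m)
  case 0
  have "wbox 0 R = {0}"
    by (auto simp: wbox_def intro!: bcontfun_eqI)
  then show ?case by simp
next
  case (Suc m)
  have eq: "wbox (Suc m) R = (\<lambda>p. fst p + snd p *\<^sub>R dl m) ` (wbox m R \<times> {-R..R})"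
  proof (intro equalityI subsetI)
    fix u assume u: "u \<in> wbox (Suc m) R"
    define u1 where "u1 = u - apply_bcontfun u m *\<^sub>R dl m"
    have "u1 \<in> wbox m R" using u by (auto simp: wbox_def u1_def)
    moreover have "apply_bcontfun u m \<in> {-R..R}" using u by (auto simp: wbox_def)
    moreover have "u = u1 + apply_bcontfun u m *\<^sub>R dl m" by (simp add: u1_def)
    ultimately show "u \<in> (\<lambda>p. fst p + snd p *\<^sub>R dl m) ` (wbox m R \<times> {-R..R})"
      by (intro image_eqI[of _ _ "(u1, apply_bcontfun u m)"]) auto
  next
    fix u assume "u \<in> (\<lambda>p. fst p + snd p *\<^sub>R dl m) ` (wbox m R \<times> {-R..R})"
    then obtain u1 c where "u = u1 + c *\<^sub>R dl m" "u1 \<in> wbox m R" "c \<in> {-R..R}" by auto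
    then show "u \<in> wbox (Suc m) R" by (auto simp: wbox_def)
  qed
  have "compact ((\<lambda>p. fst p + snd p *\<^sub>R dl m) ` (wbox m R \<times> {-R..R}))"
    by (intro compact_continuous_image compact_Times Suc compact_Icc continuous_intros)
  then show ?case using eq by simp
qed

lemma rank_kernel:
  fixes A :: "real mat"
  assumes A: "A \<in> carrier_mat nr nc" and rk: "vec_space.rank nr A = nc"
    and v: "v \<in> carrier_vec nc" and Av: "A *\<^sub>v v = 0\<^sub>v nr"
  shows "v = 0\<^sub>v nc"
proof -
  interpret vec_space "TYPE(real)" nr .
  show ?thesis
  proof (cases "distinct (cols A)")
    case True
    have "lin_indpt (set (cols A))" using full_rank_lin_indpt[OF A rk True] .
    then show ?thesis using lin_depI[OF A v _ Av True] by blast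
  next
    case False
    obtain S where S: "maximal S (\<lambda>T. T \<subseteq> set (cols A) \<and> lin_indpt T)"
      using maximal_exists[of "(\<lambda>T. T \<subseteq> set (cols A) \<and> lin_indpt T)" "card (set (cols A))" "{}"]
      by (meson List.finite_set card_mono empty_iff empty_subsetI finite_lin_indpt2 rev_finite_subset)
    then have "card S \<le> card (set (cols A))" by (simp add: card_mono maximal_def)
    then have "card S < nc"
      using A cols_length card_length False card_distinct carrier_matD(2) nat_less_le
      by (metis dual_order.antisym dual_order.trans)
    then show ?thesis using rank_card_indpt[OF A S] rk by simp
  qed
qed

theorem theorem1:
  fixes L T :: nat and n :: "nat \<Rightarrow> nat"
    and s :: "nat \<Rightarrow> real \<Rightarrow> real" and b :: "nat \<Rightarrow> nat \<Rightarrow> real"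
    and fstar :: "(nat \<Rightarrow> real) \<Rightarrow> (nat \<Rightarrow> real)"
    and xs :: "nat \<Rightarrow> (nat \<Rightarrow> real)"
    and E :: "(nat \<Rightarrow> real) \<Rightarrow> (nat \<Rightarrow> real) \<Rightarrow> real"
  assumes L_pos: "L \<ge> 1"
    and n_pos: "\<forall>l\<le>L. n l \<ge> 1"
    and act: "\<forall>l. 1 \<le> l \<and> l < L \<longrightarrow> smooth_real (s l) \<and> mono (s l) \<and> lipschitz_real (s l)"
    and act_last: "s L = (\<lambda>t. t)"
    and fstar_map: "\<forall>x\<in>vsp (n 0). fstar x \<in> vsp (n L)"
    and xs_in: "\<forall>t<T. xs t \<in> vsp (n 0)"
    and E_diff: "\<forall>y\<in>vsp (n L). differentiable_on_Rm (n L) (\<lambda>phi. E phi y)"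
    and E_min: "\<forall>y\<in>vsp (n L). \<forall>phi\<in>vsp (n L). E y y \<le> E phi y"
    and E_crit: "\<forall>y\<in>vsp (n L). \<forall>phi\<in>vsp (n L).
                   grad (n L) (\<lambda>psi. E psi y) phi = (\<lambda>_. 0) \<longleftrightarrow> phi = y"
    and rank_P: "\<forall>w\<in>vsp (wdim n L). vec_space.rank (wdim n L) (Pmat n L s b T xs w) = T * n L"
  shows
    "(\<forall>wstar\<in>vsp (wdim n L). (\<forall>t<T. net n s b L wstar (xs t) = fstar (xs t)) \<longrightarrow>
        global_min (wdim n L) (emp_loss n L s b E fstar T xs) wstar)
     \<and> ((\<exists>wstar\<in>vsp (wdim n L). \<forall>t<T. net n s b L wstar (xs t) = fstar (xs t)) \<longrightarrow>
        (\<forall>w. critical_point (wdim n L) (emp_loss n L s b E fstar T xs) w \<longrightarrow>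
             global_min (wdim n L) (emp_loss n L s b E fstar T xs) w))
     \<and> ((\<not> (\<exists>wstar\<in>vsp (wdim n L). \<forall>t<T. net n s b L wstar (xs t) = fstar (xs t))) \<longrightarrow>
        (\<forall>w. \<not> critical_point (wdim n L) (emp_loss n L s b E fstar T xs) w)
        \<and> \<not> coercive (wdim n L) (emp_loss n L s b E fstar T xs))"
proof -
  define m where "m = wdim n L"
  define K where "K = n L"
  define J where "J = emp_loss n L s b E fstar T xs"
  define y where "y = (\<lambda>t. fstar (xs t))"
  have Kpos: "K > 0" using n_pos[rule_format, of L] unfolding K_def by simp
  have L_suc: "Suc (L - 1) = L" using L_pos by simp
  have out: "\<And>w x. net n s b L w x \<in> vsp K"
    using net_vsp[of n s b "L - 1"] unfolding L_suc K_def by blast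
  have yv: "\<And>t. t < T \<Longrightarrow> y t \<in> vsp K"
    using fstar_map xs_in unfolding y_def K_def by blast
  have sd: "\<exists>d. (s l' has_real_derivative d) (at z)" if "1 \<le> l'" "l' \<le> L" for l' z
  proof (cases "l' < L")
    case True
    then have "smooth_real (s l')" using act that by auto
    then obtain D where D: "D 0 = s l'" "\<And>k x. (D k has_real_derivative D (Suc k) x) (at x)"
      unfolding smooth_real_def by blast
    have "(D 0 has_real_derivative D (Suc 0) z) (at z)" by (rule D(2))
    then show ?thesis unfolding D(1) by blast
  next
    case False
    then have "l' = L" using that by simp
    have "(s L has_real_derivative 1) (at z)" unfolding act_last by (rule DERIV_ident)
    then show ?thesis using \<open>l' = L\<close> by blast
  qed
  have Fdiff: "\<And>u0 t k. \<exists>D. ((\<lambda>u. net n s b L (apply_bcontfun u) (xs t) k) has_derivative D) (at u0)"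
    by (rule net_diff[OF le_refl sd]) auto
  have Egrad: "has_grad K (\<lambda>phi. E phi (y t)) (net n s b L w (xs t))
                  (grad K (\<lambda>phi. E phi (y t)) (net n s b L w (xs t)))" if t: "t < T" for t w
  proof -
    have "differentiable_on_Rm K (\<lambda>phi. E phi (y t))" using E_diff yv[OF t] unfolding K_def by blast
    then obtain G where G: "has_grad K (\<lambda>phi. E phi (y t)) (net n s b L w (xs t)) G"
      unfolding differentiable_on_Rm_def using out by blast
    show ?thesis using G grad_eq[OF G out] by simp
  qed
  have jeq: "J = (\<lambda>w. (1 / real T) * (\<Sum>t<T. E (net n s b L w (xs t)) (y t)))"
    by (simp add: J_def emp_loss_def y_def fun_eq_iff)
  have Jder: "((\<lambda>u. J (apply_bcontfun u)) has_derivative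
          (\<lambda>v. (1 / real T) * (\<Sum>t<T. \<Sum>k<K. grad K (\<lambda>phi. E phi (y t)) (net n s b L (apply_bcontfun u0) (xs t)) k * DF t k v))) (at u0)"
    if DF: "\<And>t k. ((\<lambda>u. net n s b L (apply_bcontfun u) (xs t) k) has_derivative DF t k) (at u0)" for u0 DF
    unfolding jeq
    by (rule J_deriv[where Fn = "\<lambda>t w. net n s b L w (xs t)" and Ef = "\<lambda>t phi. E phi (y t)", OF out DF Egrad])
  have Jdiff: "\<exists>D. ((\<lambda>u. J (apply_bcontfun u)) has_derivative D) (at u0)" for u0
  proof -
    define DF where "DF = (\<lambda>t k. SOME D. ((\<lambda>u. net n s b L (apply_bcontfun u) (xs t) k) has_derivative D) (at u0))"
    have "\<And>t k. ((\<lambda>u. net n s b L (apply_bcontfun u) (xs t) k) has_derivative DF t k) (at u0)"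
      unfolding DF_def by (rule someI_ex[OF Fdiff])
    then show ?thesis using Jder by blast
  qed
  have exact_min: "global_min m J w"
    if w: "w \<in> vsp m" and ex: "\<forall>t<T. net n s b L w (xs t) = fstar (xs t)" for w
    unfolding global_min_def
  proof (intro conjI ballI w)
    fix w' assume "w' \<in> vsp m"
    have "(\<Sum>t<T. E (net n s b L w (xs t)) (fstar (xs t))) \<le> (\<Sum>t<T. E (net n s b L w' (xs t)) (fstar (xs t)))"
    proof (rule sum_mono)
      fix t assume t: "t \<in> {..<T}"
      then have "E (y t) (y t) \<le> E (net n s b L w' (xs t)) (y t)"
        using E_min[folded K_def] yv[of t] out[of w' "xs t"] by blast
      then show "E (net n s b L w (xs t)) (fstar (xs t)) \<le> E (net n s b L w' (xs t)) (fstar (xs t))"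
        using ex t by (auto simp: y_def)
    qed
    then show "J w \<le> J w'" unfolding J_def emp_loss_def by (intro mult_left_mono) auto
  qed
  have crit_exact: "\<forall>t<T. net n s b L w (xs t) = fstar (xs t)" if cp: "critical_point m J w" for w
  proof (cases "T = 0")
    case True then show ?thesis by simp
  next
    case False
    then have Tpos: "T > 0" by simp
    have w: "w \<in> vsp m" and hg0: "has_grad m J w (\<lambda>_. 0)" using cp unfolding critical_point_def by auto
    define u0 where "u0 = emb m w"
    have au0: "apply_bcontfun u0 = w" unfolding u0_def by (rule apply_emb_vsp[OF w])
    define DF where "DF = (\<lambda>t k. SOME D. ((\<lambda>u. net n s b L (apply_bcontfun u) (xs t) k) has_derivative D) (at u0))"
    have DF: "\<And>t k. ((\<lambda>u. net n s b L (apply_bcontfun u) (xs t) k) has_derivative DF t k) (at u0)"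
      unfolding DF_def by (rule someI_ex[OF Fdiff])
    define g where "g = (\<lambda>t. grad K (\<lambda>phi. E phi (y t)) (net n s b L w (xs t)))"
    define DJ where "DJ = (\<lambda>v. (1 / real T) * (\<Sum>t<T. \<Sum>k<K. g t k * DF t k v))"
    have dJ: "((\<lambda>u. J (apply_bcontfun u)) has_derivative DJ) (at u0)"
      using Jder[OF DF] unfolding DJ_def g_def au0 .
    have blJ: "linear DJ" using has_derivative_linear[OF dJ] .
    have "has_grad m J w (\<lambda>r. if r < m then DJ (dl r) else 0)"
      by (rule conv1[OF dJ[unfolded u0_def] w])
    then have "(\<lambda>r. if r < m then DJ (dl r) else 0) = (\<lambda>_. 0)"
      using has_grad_unique[OF _ hg0 w] by blast
    then have DJ0: "\<And>r. r < m \<Longrightarrow> DJ (dl r) = 0" by (metis (mono_tags))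
    have gradF: "grad m (\<lambda>w'. net n s b L w' (xs t) k) w = (\<lambda>r. if r < m then DF t k (dl r) else 0)" for t k
      by (rule grad_eq[OF conv1[OF DF[unfolded u0_def] w] w])
    define P where "P = Pmat n L s b T xs w"
    have Pc: "P \<in> carrier_mat m (T * K)" unfolding P_def Pmat_def m_def K_def by simp
    have Pidx: "P $$ (r, c) = DF (c div K) (c mod K) (dl r)" if "r < m" "c < T * K" for r c
      using that gradF unfolding P_def Pmat_def m_def[symmetric] K_def[symmetric] by simp
    define ep where "ep = Matrix.vec (T * K) (\<lambda>c. g (c div K) (c mod K))"
    have epc: "ep \<in> carrier_vec (T * K)" unfolding ep_def by simp
    define h where "h = (\<lambda>r. if r < m then (P *\<^sub>v ep) $ r else 0)"
    have hv: "h \<in> vsp m" unfolding h_def vsp_def by simp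
    have hval: "h r = (\<Sum>t<T. \<Sum>k<K. DF t k (dl r) * g t k)" if r: "r < m" for r
    proof -
      have "h r = (\<Sum>c\<in>{0..<T * K}. P $$ (r, c) * ep $ c)"
        using r Pc epc unfolding h_def by (simp add: scalar_prod_def)
      also have "\<dots> = (\<Sum>c<T * K. DF (c div K) (c mod K) (dl r) * g (c div K) (c mod K))"
        using r by (auto simp: Pidx ep_def atLeast0LessThan intro!: sum.cong)
      also have "\<dots> = (\<Sum>t<T. \<Sum>k<K. DF t k (dl r) * g t k)"
        by (rule sum_div_mod[OF Kpos])
      finally show ?thesis .
    qed
    have "DJ (emb m h) = (\<Sum>r<m. h r * DJ (dl r))" by (rule linear_emb[OF blJ])
    also have "\<dots> = 0" using DJ0 by simp
    finally have z1: "DJ (emb m h) = 0" .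
    have "DJ (emb m h) = (1 / real T) * (\<Sum>t<T. \<Sum>k<K. g t k * (\<Sum>r<m. h r * DF t k (dl r)))"
      unfolding DJ_def
      using linear_emb[OF has_derivative_linear[OF DF]] by simp
    also have "(\<Sum>t<T. \<Sum>k<K. g t k * (\<Sum>r<m. h r * DF t k (dl r))) = (\<Sum>r<m. h r * (\<Sum>t<T. \<Sum>k<K. DF t k (dl r) * g t k))"
      by (simp add: sum_distrib_left sum.swap[of _ "{..<m}"] mult.commute mult.left_commute)
    also have "\<dots> = (\<Sum>r<m. (h r)\<^sup>2)"
      by (intro sum.cong refl) (simp add: hval power2_eq_square)
    finally have "(1 / real T) * (\<Sum>r<m. (h r)\<^sup>2) = 0" using z1 by simp
    then have "(\<Sum>r<m. (h r)\<^sup>2) = 0" using Tpos by simp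
    then have h0: "\<And>r. r < m \<Longrightarrow> h r = 0"
      by (simp add: sum_nonneg_eq_0_iff)
    have "P *\<^sub>v ep = 0\<^sub>v m"
    proof (rule eq_vecI)
      show "dim_vec (P *\<^sub>v ep) = dim_vec (0\<^sub>v m)" using Pc by simp
      fix r assume "r < dim_vec (0\<^sub>v m)"
      then have r: "r < m" by simp
      then show "(P *\<^sub>v ep) $ r = 0\<^sub>v m $ r" using h0[OF r] by (simp add: h_def)
    qed
    moreover have "vec_space.rank m P = T * K"
      using rank_P w unfolding P_def m_def K_def by blast
    ultimately have ep0: "ep = 0\<^sub>v (T * K)" using rank_kernel[OF Pc _ epc] by blast
    show ?thesis
    proof (intro allI impI)
      fix t assume t: "t < T"
      have gz: "g t k = 0" for k
      proof (cases "k < K")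
        case True
        have lt: "t * K + k < T * K"
        proof -
          have "t * K + k < t * K + K" using True by simp
          also have "\<dots> = Suc t * K" by simp
          also have "\<dots> \<le> T * K" using t by (intro mult_right_mono) auto
          finally show ?thesis .
        qed
        have "ep $ (t * K + k) = 0" using ep0 lt by simp
        then show ?thesis using lt True unfolding ep_def by simp
      next
        case False
        have "g t \<in> vsp K" using Egrad[OF t, of w] unfolding g_def has_grad_def by blast
        then show ?thesis using False unfolding vsp_def by simp
      qed
      then have "g t = (\<lambda>_. 0)" by auto
      then have "grad (n L) (\<lambda>psi. E psi (fstar (xs t))) (net n s b L w (xs t)) = (\<lambda>_. 0)"
        unfolding g_def y_def K_def .
      then show "net n s b L w (xs t) = fstar (xs t)"
        using E_crit yv[OF t] out[of w "xs t"] unfolding y_def K_def by blast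
    qed
  qed
  have part3: "\<not> coercive m J" if nex: "\<not> (\<exists>wstar\<in>vsp m. \<forall>t<T. net n s b L wstar (xs t) = fstar (xs t))"
  proof
    assume co: "coercive m J"
    then obtain R where R: "\<forall>w\<in>vsp m. enorm m w > R \<longrightarrow> J w > J (\<lambda>_. 0)"
      unfolding coercive_def by blast
    define R' where "R' = max R 0"
    have cpt: "compact (wbox m R')" by (rule box_compact) (simp add: R'_def)
    have ne: "0 \<in> wbox m R'" by (simp add: wbox_def R'_def)
    have cont: "continuous_on (wbox m R') (\<lambda>u. J (apply_bcontfun u))"
      apply (rule continuous_at_imp_continuous_on)
      using Jdiff has_derivative_continuous by blast
    obtain us where us: "us \<in> wbox m R'" "\<forall>u\<in>wbox m R'. J (apply_bcontfun us) \<le> J (apply_bcontfun u)"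
      using continuous_attains_inf[OF cpt _ cont] ne by blast
    define ws where "ws = apply_bcontfun us"
    have wsv: "ws \<in> vsp m" using us(1) unfolding wbox_def vsp_def ws_def by blast
    have mn: "\<forall>w'\<in>vsp m. J ws \<le> J w'"
    proof
      fix w' assume w': "w' \<in> vsp m"
      show "J ws \<le> J w'"
      proof (cases "enorm m w' > R")
        case True
        then have "J w' > J (\<lambda>_. 0)" using R w' by blast
        moreover have "J ws \<le> J (apply_bcontfun 0)" using us ne unfolding ws_def by blast
        moreover have "apply_bcontfun (0::V) = (\<lambda>_. 0)" by (simp add: fun_eq_iff)
        ultimately show ?thesis by simp
      next
        case False
        have "emb m w' \<in> wbox m R'" unfolding wbox_def
        proof (intro CollectI allI conjI impI)
          fix i assume "i < m"
          then show "\<bar>apply_bcontfun (emb m w') i\<bar> \<le> R'"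
            using coord_le_enorm[of i m w'] False by (simp add: apply_emb R'_def)
        next
          fix i assume "m \<le> i"
          then show "apply_bcontfun (emb m w') i = 0" by (simp add: apply_emb)
        qed
        then have "J ws \<le> J (apply_bcontfun (emb m w'))" using us unfolding ws_def by blast
        then show ?thesis using apply_emb_vsp[OF w'] by simp
      qed
    qed
    have "critical_point m J ws" by (rule min_crit[OF Jdiff wsv mn])
    then have "\<forall>t<T. net n s b L ws (xs t) = fstar (xs t)" by (rule crit_exact)
    then show False using nex wsv by blast
  qed
  show ?thesis
    unfolding m_def[symmetric] J_def[symmetric]
  proof (intro conjI)
    show "\<forall>wstar\<in>vsp m. (\<forall>t<T. net n s b L wstar (xs t) = fstar (xs t)) \<longrightarrow> global_min m J wstar"
      using exact_min by blast
    show "(\<exists>wstar\<in>vsp m. \<forall>t<T. net n s b L wstar (xs t) = fstar (xs t)) \<longrightarrow>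
        (\<forall>w. critical_point m J w \<longrightarrow> global_min m J w)"
      using exact_min crit_exact unfolding critical_point_def by blast
    show "(\<not> (\<exists>wstar\<in>vsp m. \<forall>t<T. net n s b L wstar (xs t) = fstar (xs t))) \<longrightarrow>
        (\<forall>w. \<not> critical_point m J w) \<and> \<not> coercive m J"
      using crit_exact part3 unfolding critical_point_def by blast
  qed
qed

end
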